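(* Let $\mathcal{X}\subseteq\mathbb{R}^d$ be a nonempty closed convex bounded set, $R\ge\max_{x,y\in\mathcal{X}}\|x-y\|$, and let $F\colon\mathcal{X}\to\mathbb{R}^d$ be monotone. Let $x_0,x_1,\dots,x_T\in\mathcal{X}$ be the iterates of Algorithm AdaPEG (described in the context), $\bar x_T=\frac1T\sum_{t=1}^Tx_t$, and $\xi_t:=F(x_t)-\widehat{F(x_t)}$. Then \[T\cdot\mathrm{Err}(\bar x_T)\le\sup_{y\in\mathcal{X}}\left(\sum_{t=1}^T\langle\widehat{F(x_t)},x_t-y\rangle\right)+R\left\|\sum_{t=1}^T\xi_t\right\|+\sum_{t=1}^T\langle\xi_t,x_t-x_0\rangle.\]
   Context: $\|\cdot\|$ is the Euclidean norm. Monotone: $\langle F(x)-F(y),x-y\rangle\ge0$ for all $x,y\in\mathcal{X}$. $\widehat{F(x_t)}\in\mathbb{R}^d$ denotes the (stochastic) oracle answer returned when querying $F$ at $x_t$. $\mathrm{Err}(x)=\sup_{y\in\mathcal{X}}\langle F(y),x-y\rangle$. Algorithm AdaPEG: $x_0=z_0\in\mathcal{X}$, $\gamma_0\ge0$, $\eta>0$. For $t=1,\dots,T$: $x_t=\arg\min_{u\in\mathcal{X}}\{\langle\widehat{F(x_{t-1})},u\rangle+\tfrac12\gamma_{t-1}\|u-z_{t-1}\|^2\}$; $\gamma_t=\frac1\eta\sqrt{\eta^2\gamma_0^2+\sum_{s=1}^t\|\widehat{F(x_s)}-\widehat{F(x_{s-1})}\|^2}$; $z_t=\arg\min_{u\in\mathcal{X}}\{\langle\widehat{F(x_t)},u\rangle+\tfrac12\gamma_{t-1}\|u-z_{t-1}\|^2+\tfrac12(\gamma_t-\gamma_{t-1})\|u-x_t\|^2\}$.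 *)

theory Defs
  imports "HOL-Analysis.Analysis"
begin

definition monotone_op :: "'a::real_inner set \<Rightarrow> ('a \<Rightarrow> 'a) \<Rightarrow> bool" where
  "monotone_op X F \<longleftrightarrow> (\<forall>x\<in>X. \<forall>y\<in>X. inner (F x - F y) (x - y) \<ge> 0)"

definition Err :: "'a::real_inner set \<Rightarrow> ('a \<Rightarrow> 'a) \<Rightarrow> 'a \<Rightarrow> real" where
  "Err X F x = (SUP y\<in>X. inner (F y) (x - y))"

definition is_argmin_on :: "'a set \<Rightarrow> ('a \<Rightarrow> real) \<Rightarrow> 'a \<Rightarrow> bool" where
  "is_argmin_on X phi u \<longleftrightarrow> u \<in> X \<and> (\<forall>v\<in>X. phi u \<le> phi v)"

text \<open>The iterates x, z and step sizes gamma of AdaPEG up to horizon T,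
  with oracle answers Fh t returned when querying F at x t.\<close>
definition AdaPEG :: "'a::euclidean_space set \<Rightarrow> real \<Rightarrow> nat \<Rightarrow> (nat \<Rightarrow> 'a) \<Rightarrow>
    (nat \<Rightarrow> 'a) \<Rightarrow> (nat \<Rightarrow> 'a) \<Rightarrow> (nat \<Rightarrow> real) \<Rightarrow> bool" where
  "AdaPEG X eta T Fh x z gamma \<longleftrightarrow>
     x 0 \<in> X \<and> z 0 = x 0 \<and> gamma 0 \<ge> 0 \<and> eta > 0 \<and>
     (\<forall>t\<in>{1..T}.
        is_argmin_on X (\<lambda>u. inner (Fh (t-1)) u + 1/2 * gamma (t-1) * (norm (u - z (t-1)))\<^sup>2) (x t) \<and>
        gamma t = 1 / eta * sqrt (eta\<^sup>2 * (gamma 0)\<^sup>2 + (\<Sum>s=1..t. (norm (Fh s - Fh (s-1)))\<^sup>2)) \<and>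
        is_argmin_on X (\<lambda>u. inner (Fh t) u + 1/2 * gamma (t-1) * (norm (u - z (t-1)))\<^sup>2
                               + 1/2 * (gamma t - gamma (t-1)) * (norm (u - x t))\<^sup>2) (z t))"

end

theory Submission
  imports Defs
begin

theorem lemmaB1:
  fixes X :: "'a::euclidean_space set" and F :: "'a \<Rightarrow> 'a" and Fh x z :: "nat \<Rightarrow> 'a"
    and gamma :: "nat \<Rightarrow> real" and R eta :: real and T :: nat
  assumes "X \<noteq> {}" and "closed X" and "convex X" and "bounded X"
    and "\<forall>u\<in>X. \<forall>v\<in>X. norm (u - v) \<le> R"
    and "monotone_op X F"
    and "T \<ge> 1"
    and "AdaPEG X eta T Fh x z gamma"
  shows "real T * Err X F ((1 / real T) *\<^sub>R (\<Sum>t=1..T. x t))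
    \<le> (SUP y\<in>X. (\<Sum>t=1..T. inner (Fh t) (x t - y)))
       + R * norm (\<Sum>t=1..T. F (x t) - Fh t)
       + (\<Sum>t=1..T. inner (F (x t) - Fh t) (x t - x 0))"
proof -
  define G where "G y = (\<Sum>t=1..T. inner (Fh t) (x t - y))" for y
  define S where "S = (SUP y\<in>X. G y)"
  define C where "C = R * norm (\<Sum>t=1..T. F (x t) - Fh t) + (\<Sum>t=1..T. inner (F (x t) - Fh t) (x t - x 0))"
  have xX: "x t \<in> X" if "t \<in> {1..T}" for t
    using assms(8) that unfolding AdaPEG_def is_argmin_on_def by blast
  have x0: "x 0 \<in> X" using assms(8) unfolding AdaPEG_def by blast
  obtain B where B: "\<And>y. y \<in> X \<Longrightarrow> norm y \<le> B"
    using assms(4) bounded_iff by blast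
  have Geq: "G y = (\<Sum>t=1..T. inner (Fh t) (x t)) - inner (\<Sum>t=1..T. Fh t) y" for y
    unfolding G_def by (simp add: inner_diff_right sum_subtractf inner_sum_left)
  have bdd: "bdd_above (G ` X)"
  proof (rule bdd_aboveI2)
    fix y assume "y \<in> X"
    have "- inner (\<Sum>t=1..T. Fh t) y \<le> norm (\<Sum>t=1..T. Fh t) * norm y"
      using norm_cauchy_schwarz[of "\<Sum>t=1..T. Fh t" "-y"] by simp
    also have "\<dots> \<le> norm (\<Sum>t=1..T. Fh t) * B"
      using B[OF \<open>y \<in> X\<close>] by (simp add: mult_left_mono)
    finally show "G y \<le> (\<Sum>t=1..T. inner (Fh t) (x t)) + norm (\<Sum>t=1..T. Fh t) * B"
      unfolding Geq by linarith
  qed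
  have Tpos: "real T > 0" using assms(7) by simp
  have key: "real T * inner (F y) ((1 / real T) *\<^sub>R (\<Sum>t=1..T. x t) - y) \<le> S + C"
    if yX: "y \<in> X" for y
  proof -
    have "real T * inner (F y) ((1 / real T) *\<^sub>R (\<Sum>t=1..T. x t) - y)
        = (\<Sum>t=1..T. inner (F y) (x t - y))"
      using Tpos by (simp add: inner_diff_right inner_sum_right sum_subtractf algebra_simps)
    also have "\<dots> \<le> (\<Sum>t=1..T. inner (F (x t)) (x t - y))"
    proof (rule sum_mono)
      fix t assume "t \<in> {1..T}"
      have "inner (F (x t) - F y) (x t - y) \<ge> 0"
        using assms(6) xX[OF \<open>t \<in> {1..T}\<close>] yX unfolding monotone_op_def by blast
      then show "inner (F y) (x t - y) \<le> inner (F (x t)) (x t - y)"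
        by (simp add: inner_diff_left)
    qed
    also have "\<dots> = G y + (\<Sum>t=1..T. inner (F (x t) - Fh t) (x t - x 0))
        + inner (\<Sum>t=1..T. F (x t) - Fh t) (x 0 - y)"
      unfolding G_def by (simp add: inner_sum_left inner_diff_left inner_diff_right sum_subtractf sum.distrib[symmetric] algebra_simps)
    also have "inner (\<Sum>t=1..T. F (x t) - Fh t) (x 0 - y) \<le> R * norm (\<Sum>t=1..T. F (x t) - Fh t)"
    proof -
      have "inner (\<Sum>t=1..T. F (x t) - Fh t) (x 0 - y) \<le> norm (\<Sum>t=1..T. F (x t) - Fh t) * norm (x 0 - y)"
        using norm_cauchy_schwarz by blast
      also have "\<dots> \<le> norm (\<Sum>t=1..T. F (x t) - Fh t) * R"
        using assms(5) x0 yX by (simp add: mult_left_mono)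
      finally show ?thesis by (simp add: mult.commute)
    qed
    also have "G y \<le> S" unfolding S_def using bdd yX by (rule cSUP_upper2) simp
    finally show ?thesis unfolding C_def by linarith
  qed
  have "Err X F ((1 / real T) *\<^sub>R (\<Sum>t=1..T. x t)) \<le> (S + C) / real T"
    unfolding Err_def
  proof (rule cSUP_least)
    show "X \<noteq> {}" by fact
    fix y assume "y \<in> X"
    from key[OF this] Tpos show "inner (F y) ((1 / real T) *\<^sub>R (\<Sum>t=1..T. x t) - y) \<le> (S + C) / real T"
      by (simp add: field_simps)
  qed
  then have "real T * Err X F ((1 / real T) *\<^sub>R (\<Sum>t=1..T. x t)) \<le> S + C"
    using Tpos by (simp add: field_simps)
  then show ?thesis unfolding S_def C_def G_def by linarith
qed

end
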